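(* For all non-negative integers $n$ and $p$, $$\begin{aligned}\sum_{k=1}^n\frac{k}{2^{2k}}\binom{2(k+p)}{k+p}\binom{k+p}{k}\left(O_{k+p}-O_p\right)&=\frac{n}{2^{2n}}\binom{2(p+1)}{p+1}^{-1}\binom{2p}{p}\binom{2(n+p+1)}{n+p+1}\binom{n+p+1}{n}\left(O_{n+p+1}-O_{p+1}\right)\\&\quad-\frac{1}{2^{2n-2}}\binom{2(p+2)}{p+2}^{-1}\binom{2p}{p}\binom{2(n+p+1)}{n+p+1}\binom{n+p+1}{n-1}\left(O_{n+p+1}-O_{p+2}\right).\end{aligned}$$ In particular, $\sum_{k=1}^n\frac{k}{2^{2k}}\binom{2k}{k}O_k=\frac{n(n+1)}{2^{2n+1}}\binom{2(n+1)}{n+1}(O_{n+1}-1)-\frac{n(n+1)}{3\cdot2^{2n}}\binom{2(n+1)}{n+1}\left(O_{n+1}-\frac43\right)$.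
   Context: The odd harmonic numbers are $O_n=\sum_{k=1}^n\frac{1}{2k-1}$, $O_0=0$. Binomial coefficients $\binom{a}{-1}$ are $0$. *)

theory Defs
  imports Complex_Main
begin

definition oddH :: "nat \<Rightarrow> real" where
  "oddH n = (\<Sum>k=1..n. 1 / (2 * real k - 1))"

definition binomZ :: "nat \<Rightarrow> int \<Rightarrow> real" where
  "binomZ a k = (if k < 0 then 0 else real (a choose nat k))"

end

theory Submission
  imports Defs
begin

lemma oddH_Suc: "oddH (Suc m) = oddH m + 1 / (2 * real m + 1)"
  unfolding oddH_def by (simp add: algebra_simps)

definition TT :: "nat \<Rightarrow> nat \<Rightarrow> real" where
 "TT p n = fact (2*(n+p+1)) / (fact (n+p+1) * fact n * fact (p+1) * 4^n)"

definition GG :: "nat \<Rightarrow> nat \<Rightarrow> real" where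
 "GG p n = real n * (real p+1) / (2*(2*real p+1)) * ((oddH (n+p+1) - oddH (p+1)) - 2/(2*real p+3)*(oddH (n+p+1) - oddH (p+2)))"

lemma TT_Suc: "TT p (Suc n) = TT p n * (2*(real n + real p + 1)+1) / (2*(real n+1))"
proof -
  define N where "N = n+p+1"
  have e1: "fact (2*(Suc n+p+1)) = (fact (2*N) :: real) * (2*real N+1)*(2*real N+2)"
    unfolding N_def by (simp add: fact_Suc algebra_simps)
  have e2: "fact (Suc n+p+1) = (fact N :: real) * (real N+1)"
    unfolding N_def by (simp add: fact_Suc algebra_simps)
  have e3: "fact (Suc n) = (fact n :: real) * (real n+1)"
    by (simp add: fact_Suc algebra_simps)
  have e4: "fact (2*(n+p+1)) = (fact (2*N) :: real)" "fact (n+p+1) = (fact N :: real)" unfolding N_def by auto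
  have rN: "real n + real p + 1 = real N" unfolding N_def by simp
  have pos: "real N + 1 > 0" "real n + 1 > 0" "(fact N::real) > 0" "(fact n::real) > 0" "(fact (p+1)::real) > 0"
    by auto
  show ?thesis unfolding TT_def e1 e2 e3 e4 rN using pos
    by (simp add: divide_simps del: of_nat_fact fact_Suc) (simp add: algebra_simps)? 
qed

lemma mainA:
  "(\<Sum>k=1..n. real k / 4^k * (fact (2*(k+p)) / (fact (k+p) * fact k * fact p)) * (oddH (k+p) - oddH p))
   = TT p n * GG p n"
proof (induction n)
  case 0
  then show ?case by (simp add: GG_def)
next
  case (Suc n)
  define N where "N = n+p+1"
  have e1: "fact (2*(Suc n+p)) = (fact (2*N) :: real)" "fact (Suc n+p) = (fact N :: real)" 
       "fact (2*(n+p+1)) = (fact (2*N) :: real)" "fact (n+p+1) = (fact N :: real)" "Suc n + p = N"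
    unfolding N_def by auto
  have e3: "fact (Suc n) = (fact n :: real) * (real n+1)"
    by (simp add: fact_Suc algebra_simps)
  have e5: "fact (p+1) = (fact p :: real) * (real p+1)"
    by (simp add: fact_Suc algebra_simps)
  have pos: "real p + 1 > 0" "real n + 1 > 0" "(fact N::real) > 0" "(fact n::real) > 0" "(fact p::real) > 0"
    by auto
  have t: "real (Suc n) / 4^Suc n * (fact (2*(Suc n+p)) / (fact (Suc n+p) * fact (Suc n) * fact p)) * (oddH (Suc n+p) - oddH p)
     = TT p n * (real p + 1)/4 * (oddH N - oddH p)"
    unfolding TT_def e1 e3 e5 using pos by (simp add: divide_simps del: of_nat_fact fact_Suc) (simp add: algebra_simps)?
  have g: "(2*(real n + real p + 1)+1) / (2*(real n+1)) * GG p (Suc n) - GG p n = (real p + 1)/4 * (oddH N - oddH p)"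
  proof -
    have h1: "oddH (Suc n + p + 1) = oddH N + 1/(2*(real n + real p + 1)+1)" unfolding N_def
      by (simp add: oddH_Suc)
    have h2: "oddH (p+1) = oddH p + 1/(2*real p+1)" by (simp add: oddH_Suc)
    have h3: "oddH (p+2) = oddH p + 1/(2*real p+1) + 1/(2*real p+3)"
      using oddH_Suc[of "Suc p"] h2 by (simp add: numeral_2_eq_2)
    have pp: "real n \<ge> 0" "real p \<ge> 0" by auto
    show ?thesis unfolding GG_def h1 h2 h3 N_def[symmetric] using pp
      by (simp add: divide_simps) (simp add: algebra_simps)
  qed
  have "(\<Sum>k=1..Suc n. real k / 4^k * (fact (2*(k+p)) / (fact (k+p) * fact k * fact p)) * (oddH (k+p) - oddH p))
     = TT p n * GG p n + TT p n * (real p + 1)/4 * (oddH N - oddH p)"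
    unfolding sum.cl_ivl_Suc using Suc.IH t by simp
  also have "\<dots> = TT p n * ((2*(real n + real p + 1)+1) / (2*(real n+1)) * GG p (Suc n))"
  proof -
    have "TT p n * GG p n + TT p n * (real p + 1)/4 * (oddH N - oddH p)
       = TT p n * (GG p n + (real p + 1)/4 * (oddH N - oddH p))" by (simp add: algebra_simps)
    also have "\<dots> = TT p n * ((2*(real n + real p + 1)+1) / (2*(real n+1)) * GG p (Suc n))"
      unfolding g[symmetric] by simp
    finally show ?thesis .
  qed
  also have "\<dots> = TT p (Suc n) * GG p (Suc n)" by (simp add: TT_Suc)
  finally show ?case .
qed

lemma cb: "real ((2*m) choose m) = fact (2*m) / (fact m * fact m)"
  by (subst binomial_fact) (auto simp: mult_2)

lemma cb2: "k \<le> N \<Longrightarrow> real (N choose k) = fact N / (fact k * fact (N - k))"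
  by (rule binomial_fact)

lemma LHS_conv: "real k / 2 ^ (2 * k) * real ((2 * (k + p)) choose (k + p)) * real ((k + p) choose k) * D
   = real k / 4^k * (fact (2*(k+p)) / (fact (k+p) * fact k * fact p)) * D"
proof -
  have a: "real ((k + p) choose k) = fact (k+p) / (fact k * fact p)" by (subst cb2) auto
  have b: "(2::real) ^ (2*k) = 4^k" by (simp add: power_mult)
  have pos: "(fact (k+p)::real) > 0" "(fact k::real) > 0" "(fact p::real) > 0" by auto
  show ?thesis unfolding cb a b using pos by (simp add: divide_simps)
qed

lemma abstract_eq:
  fixes m y a b c d F q X Y :: real
  assumes "m \<ge> 0" "y \<ge> 0" "a > 0" "b > 0" "c > 0" "d > 0" "F > 0" "q > 0"
  shows "(m+1)/(4*q) / (d*(2*y+1)*(2*y+2)/((c*(y+1))*(c*(y+1)))) * (d/(c*c)) * (F/(a*a))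
           * (a/((b*(m+1))*(c*(y+1)))) * X
       - 1/q / (d*(2*y+1)*(2*y+2)*(2*y+3)*(2*y+4)/((c*(y+1)*(y+2))*(c*(y+1)*(y+2)))) * (d/(c*c)) * (F/(a*a))
           * (a/(b*(c*(y+1)*(y+2)))) * Y
       = F/(a*(b*(m+1))*(c*(y+1))*(4*q)) * ((m+1)*(y+1)/(2*(2*y+1)) * (X - 2/(2*y+3)*Y))"
  using assms by (simp add: divide_simps) (simp add: algebra_simps)

lemma part1:
  fixes n p :: nat
  shows "(\<Sum>k=1..n. real k / 2 ^ (2 * k) * real ((2 * (k + p)) choose (k + p))
            * real ((k + p) choose k) * (oddH (k + p) - oddH p))
       = real n / 2 ^ (2 * n) / real ((2 * (p + 1)) choose (p + 1)) * real ((2 * p) choose p)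
            * real ((2 * (n + p + 1)) choose (n + p + 1)) * real ((n + p + 1) choose n)
            * (oddH (n + p + 1) - oddH (p + 1))
         - 1 / 2 powi (2 * int n - 2) / real ((2 * (p + 2)) choose (p + 2)) * real ((2 * p) choose p)
            * real ((2 * (n + p + 1)) choose (n + p + 1)) * binomZ (n + p + 1) (int n - 1)
            * (oddH (n + p + 1) - oddH (p + 2))"
proof -
  have L: "(\<Sum>k=1..n. real k / 2 ^ (2 * k) * real ((2 * (k + p)) choose (k + p))
            * real ((k + p) choose k) * (oddH (k + p) - oddH p)) = TT p n * GG p n"
    unfolding LHS_conv mainA ..
  show ?thesis
  proof (cases n)
    case 0
    then show ?thesis unfolding L by (simp add: GG_def binomZ_def)
  next
    case (Suc m)
    define N where "N = m + p + 2"
    have nN: "n + p + 1 = N" unfolding N_def Suc by simp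
    have bz: "binomZ (n + p + 1) (int n - 1) = fact N / (fact m * fact (p+2))"
    proof -
      have "N - m = p + 2" "m \<le> N" unfolding N_def by auto
      moreover have "Suc (Suc (m + p)) = N" unfolding N_def by simp
      ultimately show ?thesis unfolding binomZ_def nN Suc using cb2[of m N] by simp
    qed
    have bn: "real ((n + p + 1) choose n) = fact N / (fact (Suc m) * fact (p+1))"
    proof -
      have "N - Suc m = p + 1" "Suc m \<le> N" unfolding N_def by auto
      then show ?thesis unfolding nN Suc[symmetric] using cb2[of "Suc m" N] Suc by simp
    qed
    have bz': "binomZ N (int n - 1) = fact N / (fact m * fact (p+2))" using bz nN by simp
    have bn': "real (N choose n) = fact N / (fact (Suc m) * fact (p+1))" using bn nN by simp
    have pw: "(2::real) powi (2 * int n - 2) = 4^m"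
    proof -
      have "2 * int n - 2 = int (2*m)" unfolding Suc by simp
      moreover have "(2::real) powi (int (2*m)) = 2^(2*m)" by (rule power_int_of_nat)
      ultimately show ?thesis by (simp only: power_mult) simp
    qed
    have pw2: "(2::real) ^ (2*n) = 4 * 4^m" unfolding Suc by (simp add: power_mult)
    have f1: "fact (2*(p+1)) = (fact (2*p)::real) * (2*real p+1)*(2*real p+2)"
      by (simp add: fact_Suc algebra_simps)
    have f2: "fact (2*(p+2)) = (fact (2*p)::real) * (2*real p+1)*(2*real p+2)*(2*real p+3)*(2*real p+4)"
      by (simp add: fact_Suc algebra_simps numeral_2_eq_2)
    have f3: "fact (p+1) = (fact p::real) * (real p+1)"
      by (simp add: fact_Suc algebra_simps)
    have f4: "fact (p+2) = (fact p::real) * (real p+1) * (real p + 2)"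
      by (simp add: fact_Suc algebra_simps numeral_2_eq_2)
    have f5: "fact (Suc m) = (fact m::real) * (real m+1)"
      by (simp add: fact_Suc algebra_simps)
    have TTe: "TT p n = fact (2*N) / (fact N * (fact m * (real m + 1)) * (fact p * (real p + 1)) * (4 * 4^m))"
      unfolding TT_def nN f3 Suc[symmetric] using f5 Suc by (simp add: power_Suc)
    have GGe: "GG p n = (real m+1)*(real p+1)/(2*(2*real p+1)) * ((oddH N - oddH (p+1)) - 2/(2*real p+3)*(oddH N - oddH (p+2)))"
      unfolding GG_def nN Suc by (simp add: N_def)
    have rn: "real n = real m + 1" unfolding Suc by simp
    have R: "real n / 2 ^ (2 * n) / real ((2 * (p + 1)) choose (p + 1)) * real ((2 * p) choose p)
            * real ((2 * (n + p + 1)) choose (n + p + 1)) * real ((n + p + 1) choose n)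
            * (oddH (n + p + 1) - oddH (p + 1))
         - 1 / 2 powi (2 * int n - 2) / real ((2 * (p + 2)) choose (p + 2)) * real ((2 * p) choose p)
            * real ((2 * (n + p + 1)) choose (n + p + 1)) * binomZ (n + p + 1) (int n - 1)
            * (oddH (n + p + 1) - oddH (p + 2)) = TT p n * GG p n"
      unfolding TTe GGe nN bz' bn' pw pw2 cb f1 f2 f3 f4 f5 rn
      using abstract_eq[of "real m" "real p" "fact N" "fact m" "fact p" "fact (2*p)" "fact (2*N)" "4^m"
          "oddH N - oddH (p+1)" "oddH N - oddH (p+2)"]
      by (simp add: mult.assoc)
    show ?thesis unfolding L R ..
  qed
qed

theorem theorem15:
  fixes n p :: nat
  shows "((\<Sum>k=1..n. real k / 2 ^ (2 * k) * real ((2 * (k + p)) choose (k + p))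
            * real ((k + p) choose k) * (oddH (k + p) - oddH p))
       = real n / 2 ^ (2 * n) / real ((2 * (p + 1)) choose (p + 1)) * real ((2 * p) choose p)
            * real ((2 * (n + p + 1)) choose (n + p + 1)) * real ((n + p + 1) choose n)
            * (oddH (n + p + 1) - oddH (p + 1))
         - 1 / 2 powi (2 * int n - 2) / real ((2 * (p + 2)) choose (p + 2)) * real ((2 * p) choose p)
            * real ((2 * (n + p + 1)) choose (n + p + 1)) * binomZ (n + p + 1) (int n - 1)
            * (oddH (n + p + 1) - oddH (p + 2)))
    \<and> ((\<Sum>k=1..n. real k / 2 ^ (2 * k) * real ((2 * k) choose k) * oddH k)
       = real n * real (n + 1) / 2 ^ (2 * n + 1) * real ((2 * (n + 1)) choose (n + 1))
            * (oddH (n + 1) - 1)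
         - real n * real (n + 1) / (3 * 2 ^ (2 * n)) * real ((2 * (n + 1)) choose (n + 1))
            * (oddH (n + 1) - 4 / 3))"
proof
  show "(\<Sum>k=1..n. real k / 2 ^ (2 * k) * real ((2 * (k + p)) choose (k + p))
            * real ((k + p) choose k) * (oddH (k + p) - oddH p))
       = real n / 2 ^ (2 * n) / real ((2 * (p + 1)) choose (p + 1)) * real ((2 * p) choose p)
            * real ((2 * (n + p + 1)) choose (n + p + 1)) * real ((n + p + 1) choose n)
            * (oddH (n + p + 1) - oddH (p + 1))
         - 1 / 2 powi (2 * int n - 2) / real ((2 * (p + 2)) choose (p + 2)) * real ((2 * p) choose p)
            * real ((2 * (n + p + 1)) choose (n + p + 1)) * binomZ (n + p + 1) (int n - 1)
            * (oddH (n + p + 1) - oddH (p + 2))" by (rule part1)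
next
  have o0: "oddH 0 = 0" "oddH 1 = 1" "oddH 2 = 4/3" "oddH (Suc 0) = 1" "oddH (Suc (Suc 0)) = 4/3" by (simp_all add: oddH_def numeral_2_eq_2)
  have L: "(\<Sum>k=1..n. real k / 2 ^ (2 * k) * real ((2 * k) choose k) * oddH k) = TT 0 n * GG 0 n"
    using mainA[where n=n and p=0] by (simp add: LHS_conv[of _ 0, simplified] o0)
  have c: "real ((2 * (n + 1)) choose (n + 1)) = fact (2*(n+1)) / (fact (n+1) * fact (n+1))" by (rule cb)
  have f: "fact (n+1) = (fact n :: real) * (real n + 1)" by (simp add: fact_Suc algebra_simps)
  have pos: "(fact n::real) > 0" "(fact (2*(n+1))::real) > 0" "real n \<ge> 0" by auto
  show "(\<Sum>k=1..n. real k / 2 ^ (2 * k) * real ((2 * k) choose k) * oddH k)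
       = real n * real (n + 1) / 2 ^ (2 * n + 1) * real ((2 * (n + 1)) choose (n + 1))
            * (oddH (n + 1) - 1)
         - real n * real (n + 1) / (3 * 2 ^ (2 * n)) * real ((2 * (n + 1)) choose (n + 1))
            * (oddH (n + 1) - 4 / 3)"
    unfolding L TT_def GG_def c
    using pos by (simp add: o0 f power_mult divide_simps) (simp add: algebra_simps)
qed

end
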